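(* Let $f:\mathbb{R}^n \to \mathbb{R}$ be strongly convex and piecewise linear-quadratic, with a fixed representation by polyhedral sets $F_1,\dots,F_p$ as described in the context, and let $C \subset \mathbb{R}^n$ be a nonempty closed convex set. Then for every $R>0$ there exists $L>0$ such that for all $x \in B_R$ and all $x^* \in \partial f(x)$, \[ \operatorname{dist}_f^{x^*}(x,C)^2 \le \begin{cases} L \cdot \operatorname{dist}(x,C)^2, & \text{if } F_x \cap C=\emptyset, \\ L \cdot \operatorname{dist}(x,F_x \cap C)^2, & \text{if } F_x \cap C \neq\emptyset. \end{cases} \]
   Context: $f$ is strongly convex if there is $\alpha>0$ with $f(y)\ge f(x)+\langle x^*,y-x\rangle+\frac{\alpha}{2}\|y-x\|_2^2$ for all $x,y\in\mathbb{R}^n$, $x^*\in\partial f(x)$. A convex $f:\mathbb{R}^n\to\mathbb{R}$ is piecewise linear-quadratic if there are finitely many polyhedral sets $F_i\subset\mathbb{R}^n$, $i\in I=\{1,\dots,p\}$, whose union is $\mathbb{R}^n$, such that on each $F_i$, $f(x)=\frac12\langle x,A_ix\rangle+\langle a_i,x\rangle+\alpha_i$ with symmetric positive semidefinite $A_i\in\mathbb{R}^{n\times n}$, $a_i\in\mathbb{R}^n$, $\alpha_i\in\mathbb{R}$. For $x\in\mathbb{R}^n$ set $I_f(x)=\{i\in I: x\in F_i\}$ and $F_x=\bigcap_{i\in I_f(x)}F_i$. $B_R=\{x\in\mathbb{R}^n:\|x\|_2\le R\}$. For $x^*\in\partial f(x)$, the Bregman distance is $D_f^{x^*}(x,y)=f(y)-f(x)-\langle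 x^*,y-x\rangle$ and $\operatorname{dist}_f^{x^*}(x,C)^2:=\min_{y\in C}D_f^{x^*}(x,y)$. $\operatorname{dist}(x,S)$ is the Euclidean distance from $x$ to a set $S$. *)

theory Defs
  imports "HOL-Analysis.Analysis"
begin

definition subdiff :: "(real^'n \<Rightarrow> real) \<Rightarrow> real^'n \<Rightarrow> (real^'n) set" where
  "subdiff f x = {s. \<forall>y. f y \<ge> f x + s \<bullet> (y - x)}"

definition strongly_convex :: "(real^'n \<Rightarrow> real) \<Rightarrow> bool" where
  "strongly_convex f \<longleftrightarrow> (\<exists>\<alpha>>0. \<forall>x y. \<forall>xs\<in>subdiff f x.
      f y \<ge> f x + xs \<bullet> (y - x) + \<alpha> / 2 * (norm (y - x))^2)"

definition plq_rep :: "(real^'n \<Rightarrow> real) \<Rightarrow> nat \<Rightarrow> (nat \<Rightarrow> (real^'n) set)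
     \<Rightarrow> (nat \<Rightarrow> real^'n^'n) \<Rightarrow> (nat \<Rightarrow> real^'n) \<Rightarrow> (nat \<Rightarrow> real) \<Rightarrow> bool" where
  "plq_rep f p F A a c \<longleftrightarrow>
     convex_on UNIV f \<and>
     (\<forall>i\<in>{1..p}. polyhedron (F i)) \<and>
     (\<Union>i\<in>{1..p}. F i) = UNIV \<and>
     (\<forall>i\<in>{1..p}. transpose (A i) = A i \<and> (\<forall>v. v \<bullet> (A i *v v) \<ge> 0)) \<and>
     (\<forall>i\<in>{1..p}. \<forall>x\<in>F i. f x = 1/2 * (x \<bullet> (A i *v x)) + a i \<bullet> x + c i)"

definition active_set :: "nat \<Rightarrow> (nat \<Rightarrow> (real^'n) set) \<Rightarrow> real^'n \<Rightarrow> (real^'n) set" where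
  "active_set p F x = (\<Inter>i\<in>{i\<in>{1..p}. x \<in> F i}. F i)"

definition bregman :: "(real^'n \<Rightarrow> real) \<Rightarrow> real^'n \<Rightarrow> real^'n \<Rightarrow> real^'n \<Rightarrow> real" where
  "bregman f xs x y = f y - f x - xs \<bullet> (y - x)"

definition bregman_dist_sq :: "(real^'n \<Rightarrow> real) \<Rightarrow> real^'n \<Rightarrow> real^'n \<Rightarrow> (real^'n) set \<Rightarrow> real" where
  "bregman_dist_sq f xs x C = (INF y\<in>C. bregman f xs x y)"

end

theory Submission
  imports Defs
begin

lemma local_piece:
  assumes rep: "plq_rep f p F A a c"
  shows "\<exists>e>0. \<forall>z\<in>ball x e. \<exists>j\<in>{1..p}. x \<in> F j \<and> z \<in> F j"
proof -
  let ?U = "\<Union>k\<in>{k\<in>{1..p}. x \<notin> F k}. F k"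
  have clF: "\<forall>i\<in>{1..p}. closed (F i)"
    using rep polyhedron_imp_closed unfolding plq_rep_def by blast
  have cl: "closed ?U"
    using clF by (intro closed_UN) auto
  have "x \<in> - ?U" by auto
  moreover have "open (- ?U)" using cl by (simp only: open_Compl)
  ultimately obtain e where e: "e > 0" "ball x e \<subseteq> - ?U"
    using open_contains_ball by blast
  have cov: "(\<Union>i\<in>{1..p}. F i) = UNIV" using rep unfolding plq_rep_def by blast
  show ?thesis
  proof (intro exI[of _ e] conjI ballI)
    fix z assume z: "z \<in> ball x e"
    have "z \<in> (\<Union>i\<in>{1..p}. F i)" using cov by auto
    then obtain j where j: "j \<in> {1..p}" "z \<in> F j" by auto
    have "z \<notin> ?U" using z e by auto
    with j show "\<exists>j\<in>{1..p}. x \<in> F j \<and> z \<in> F j" by auto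
  qed (use e in auto)
qed

lemma quad_expand:
  fixes A :: "real^'n^'n" and x d :: "real^'n"
  shows "1/2 * ((x + t *\<^sub>R d) \<bullet> (A *v (x + t *\<^sub>R d))) + b \<bullet> (x + t *\<^sub>R d) + c0
   = (1/2 * (x \<bullet> (A *v x)) + b \<bullet> x + c0)
     + t * (1/2 * (x \<bullet> (A *v d) + d \<bullet> (A *v x)) + b \<bullet> d)
     + t^2 / 2 * (d \<bullet> (A *v d))"
  by (simp add: matrix_vector_right_distrib matrix_vector_mult_scaleR inner_add_left
      inner_add_right algebra_simps power2_eq_square)

lemma case2_key:
  assumes rep: "plq_rep f p F A a c"
    and xs: "xs \<in> subdiff f x" and y: "y \<in> active_set p F x"
  shows "\<exists>j\<in>{1..p}. bregman f xs x y \<le> (y - x) \<bullet> (A j *v (y - x))"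
proof -
  obtain e where e: "e > 0" "\<forall>z\<in>ball x e. \<exists>j\<in>{1..p}. x \<in> F j \<and> z \<in> F j"
    using local_piece[OF rep] by blast
  define d where "d = y - x"
  define s where "s = min 1 (e / (2 * (norm d + 1)))"
  have epos: "e / (2 * (norm d + 1)) > 0" using e by (intro divide_pos_pos) (auto simp: add_nonneg_pos)
  hence s0: "s > 0" by (simp add: s_def)
  have s1: "s \<le> 1" by (simp add: s_def)
  have "s * norm d \<le> e / (2 * (norm d + 1)) * (norm d + 1)"
    by (intro mult_mono) (use epos in \<open>auto simp: s_def\<close>)
  also have "\<dots> = e/2"
  proof -
    have "norm d + 1 > 0" by (simp add: add_nonneg_pos)
    thus ?thesis by (simp add: field_simps)
  qed
  finally have "s * norm d < e" using e by linarith
  hence "x - s *\<^sub>R d \<in> ball x e" using s0 by (simp add: dist_norm)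
  then obtain j where j: "j \<in> {1..p}" "x \<in> F j" "x - s *\<^sub>R d \<in> F j" using e by blast
  have yj: "y \<in> F j" using y j unfolding active_set_def by auto
  have q: "\<And>z. z \<in> F j \<Longrightarrow> f z = 1/2 * (z \<bullet> (A j *v z)) + a j \<bullet> z + c j"
    using rep j(1) unfolding plq_rep_def by blast
  define Q where "Q = 1/2 * (x \<bullet> (A j *v x)) + a j \<bullet> x + c j"
  define G where "G = 1/2 * (x \<bullet> (A j *v d) + d \<bullet> (A j *v x)) + a j \<bullet> d"
  define h where "h = d \<bullet> (A j *v d)"
  have h0: "h \<ge> 0" using rep j(1) unfolding plq_rep_def h_def by blast
  have fx: "f x = Q" using q[OF j(2)] by (simp add: Q_def)
  have fy: "f y = Q + G + h/2"
    using q[OF yj] quad_expand[of x 1 d "A j" "a j" "c j"]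
    by (simp add: Q_def G_def h_def d_def)
  have fz: "f (x - s *\<^sub>R d) = Q - s * G + s^2/2 * h"
    using q[OF j(3)] quad_expand[of x "-s" d "A j" "a j" "c j"]
    by (simp add: Q_def G_def h_def)
  have sub: "f (x - s *\<^sub>R d) \<ge> f x + xs \<bullet> ((x - s *\<^sub>R d) - x)"
    using xs unfolding subdiff_def by blast
  hence "Q - s * G + s^2/2 * h \<ge> Q - s * (xs \<bullet> d)" using fz fx by simp
  hence "s * (xs \<bullet> d) \<ge> s * (G - s/2 * h)" by (simp add: algebra_simps power2_eq_square)
  hence xd: "xs \<bullet> d \<ge> G - s/2 * h" using s0 by simp
  have "s/2 * h \<le> 1/2 * h" using s1 h0 by (intro mult_right_mono) auto
  hence "bregman f xs x y \<le> h"
    unfolding bregman_def using fx fy xd d_def by simp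
  thus ?thesis using j(1) by (auto simp: h_def d_def)
qed

theorem lemma3p4:
  fixes f :: "real^'n \<Rightarrow> real" and C :: "(real^'n) set"
    and F :: "nat \<Rightarrow> (real^'n) set" and A :: "nat \<Rightarrow> real^'n^'n"
    and a :: "nat \<Rightarrow> real^'n" and c :: "nat \<Rightarrow> real" and p :: nat
  assumes "strongly_convex f"
    and "plq_rep f p F A a c"
    and "C \<noteq> {}" and "closed C" and "convex C"
    and "R > 0"
  shows "\<exists>L>0. \<forall>x\<in>cball 0 R. \<forall>xs\<in>subdiff f x.
     bregman_dist_sq f xs x C \<le>
       (if active_set p F x \<inter> C = {} then L * (infdist x C)^2
        else L * (infdist x (active_set p F x \<inter> C))^2)"
proof -
  note rep = assms(2)
  have clF: "\<forall>i\<in>{1..p}. closed (F i)"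
    using rep polyhedron_imp_closed unfolding plq_rep_def by blast
  have cov: "(\<Union>i\<in>{1..p}. F i) = UNIV" using rep unfolding plq_rep_def by blast
  have act_ne: "{i\<in>{1..p}. x \<in> F i} \<noteq> {}" for x
  proof -
    have "x \<in> (\<Union>i\<in>{1..p}. F i)" using cov by auto
    thus ?thesis by auto
  qed
  have act_closed: "closed (active_set p F x)" for x
    unfolding active_set_def using clF by (intro closed_INT) auto
  have bnn: "bregman f xs x y \<ge> 0" if "xs \<in> subdiff f x" for xs x y
    using that unfolding subdiff_def bregman_def by (auto simp: algebra_simps)
  have bds_le: "bregman_dist_sq f xs x C \<le> bregman f xs x y" if "xs \<in> subdiff f x" "y \<in> C" for xs x y
    unfolding bregman_dist_sq_def
    by (rule cINF_lower[OF _ that(2)]) (use bnn[OF that(1)] in \<open>auto intro!: bdd_belowI[of _ 0]\<close>)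
  have "\<forall>i. \<exists>B. \<forall>v. norm (A i *v v) \<le> B * norm v"
    using linear_bounded[OF matrix_vector_mul_linear] by blast
  then obtain MB where MB: "\<And>i v. norm (A i *v v) \<le> MB i * norm v" by metis
  define K where "K = (\<Sum>i\<in>{1..p}. \<bar>MB i\<bar>)"
  have K0: "K \<ge> 0" unfolding K_def by (simp add: sum_nonneg)
  have hK: "v \<bullet> (A i *v v) \<le> K * (norm v)^2" if "i \<in> {1..p}" for i v
  proof -
    have "v \<bullet> (A i *v v) \<le> norm v * norm (A i *v v)" by (rule norm_cauchy_schwarz)
    also have "\<dots> \<le> norm v * (MB i * norm v)" using MB by (intro mult_left_mono) auto
    also have "\<dots> \<le> norm v * (K * norm v)"
    proof -
      have "MB i \<le> K" unfolding K_def
        using member_le_sum[of i "{1..p}" "\<lambda>i. \<bar>MB i\<bar>"] that by force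
      thus ?thesis by (intro mult_left_mono mult_right_mono) auto
    qed
    finally show ?thesis by (simp add: power2_eq_square algebra_simps)
  qed
  obtain c0 where c0: "c0 \<in> C" using assms(3) by blast
  have cont: "continuous_on UNIV f"
    using rep unfolding plq_rep_def by (intro convex_on_continuous) auto
  have "compact (f ` cball 0 (R+1))"
    by (rule compact_continuous_image) (use cont continuous_on_subset in auto)
  hence "bounded (f ` cball 0 (R+1))" by (rule compact_imp_bounded)
  then obtain Bf where Bf0': "\<forall>y\<in>f ` cball 0 (R+1). norm y \<le> Bf" unfolding bounded_iff by blast
  have Bf: "\<And>z. z \<in> cball 0 (R+1) \<Longrightarrow> \<bar>f z\<bar> \<le> Bf" using Bf0' by auto
  have Bf0: "Bf \<ge> 0" using Bf[of 0] assms(6) by auto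
  have xsb: "norm xs \<le> 2 * Bf" if "x \<in> cball 0 R" "xs \<in> subdiff f x" for x xs
  proof (cases "xs = 0")
    case True thus ?thesis using Bf0 by simp
  next
    case False
    define u where "u = (1 / norm xs) *\<^sub>R xs"
    have nu: "norm u = 1" using False by (simp add: u_def)
    have "norm x \<le> R" using that(1) by (simp add: mem_cball_0)
    hence "norm (x + u) \<le> R + 1" using nu norm_triangle_ineq[of x u] by linarith
    hence "x + u \<in> cball 0 (R+1)" by (simp add: mem_cball_0)
    have "f (x + u) \<ge> f x + xs \<bullet> ((x + u) - x)" using that(2) unfolding subdiff_def by blast
    hence "f (x + u) \<ge> f x + xs \<bullet> u" by simp
    moreover have "xs \<bullet> u = norm xs" using False
      by (simp add: u_def inner_scaleR_right dot_square_norm power2_eq_square)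
    moreover have "\<bar>f (x+u)\<bar> \<le> Bf" using Bf \<open>x + u \<in> cball 0 (R+1)\<close> by blast
    moreover have "\<bar>f x\<bar> \<le> Bf" using that(1) Bf by auto
    ultimately show ?thesis by linarith
  qed
  define M where "M = \<bar>f c0\<bar> + Bf + 2 * Bf * (norm c0 + R)"
  have M0: "M \<ge> 0" unfolding M_def using Bf0 assms(6) by simp
  have Mb: "bregman f xs x c0 \<le> M" if "x \<in> cball 0 R" "xs \<in> subdiff f x" for x xs
  proof -
    have "\<bar>xs \<bullet> (c0 - x)\<bar> \<le> norm xs * norm (c0 - x)" by (rule Cauchy_Schwarz_ineq2)
    also have "\<dots> \<le> (2 * Bf) * (norm c0 + R)"
    proof (rule mult_mono)
      show "norm (c0 - x) \<le> norm c0 + R" using that(1) norm_triangle_ineq4[of c0 x] by simp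
    qed (use xsb[OF that] Bf0 in auto)
    finally have "\<bar>xs \<bullet> (c0 - x)\<bar> \<le> 2 * Bf * (norm c0 + R)" .
    moreover have "\<bar>f x\<bar> \<le> Bf" using that(1) Bf by auto
    ultimately show ?thesis unfolding bregman_def M_def by linarith
  qed
  define Jbad where "Jbad = {J. J \<subseteq> {1..p} \<and> J \<noteq> {} \<and> (\<Inter>i\<in>J. F i) \<inter> C = {}}"
  define T where "T = (\<Union>J\<in>Jbad. (\<Inter>i\<in>J. F i) \<inter> cball 0 R)"
  have "finite Jbad"
    by (rule finite_subset[of _ "Pow {1..p}"]) (auto simp: Jbad_def)
  hence cT: "compact T" unfolding T_def Jbad_def
    using clF by (intro compact_UN) (auto intro!: closed_Int_compact closed_INT)
  have "T \<inter> C = {}" unfolding T_def Jbad_def by auto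
  then obtain \<delta> where \<delta>: "\<delta> > 0" "\<And>x y. x \<in> T \<Longrightarrow> y \<in> C \<Longrightarrow> \<delta> \<le> dist x y"
    using separate_compact_closed[OF cT assms(4)] by blast
  define L where "L = max (M / \<delta>^2) K + 1"
  have L0: "L > 0" unfolding L_def using K0 by simp
  show ?thesis
  proof (intro exI[of _ L] conjI ballI L0)
    fix x xs assume x: "x \<in> cball (0::real^'n) R" and xs: "xs \<in> subdiff f x"
    show "bregman_dist_sq f xs x C \<le>
       (if active_set p F x \<inter> C = {} then L * (infdist x C)^2
        else L * (infdist x (active_set p F x \<inter> C))^2)"
    proof (cases "active_set p F x \<inter> C = {}")
      case True
      define J where "J = {i\<in>{1..p}. x \<in> F i}"
      have "J \<in> Jbad" unfolding Jbad_def
        using True act_ne[of x] unfolding active_set_def J_def by auto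
      moreover have "x \<in> (\<Inter>i\<in>J. F i) \<inter> cball 0 R" using x unfolding J_def by auto
      ultimately have "x \<in> T" unfolding T_def by (rule UN_I)
      obtain y where y: "y \<in> C" "infdist x C = dist x y"
        using infdist_attains_inf[OF assms(4) assms(3)] by blast
      have di: "\<delta> \<le> infdist x C" using \<delta>(2)[OF \<open>x \<in> T\<close> y(1)] y(2) by simp
      have "bregman_dist_sq f xs x C \<le> M" using bds_le[OF xs c0] Mb[OF x xs] by linarith
      also have "M = M / \<delta>^2 * \<delta>^2" using \<delta> by simp
      also have "\<dots> \<le> L * (infdist x C)^2"
      proof (rule mult_mono)
        show "M / \<delta>^2 \<le> L" unfolding L_def by simp
        show "\<delta>^2 \<le> (infdist x C)^2" using di \<delta>(1) by (intro power_mono) auto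
      qed (use L0 M0 in auto)
      finally show ?thesis using True by simp
    next
      case False
      have cl: "closed (active_set p F x \<inter> C)" using act_closed assms(4) by blast
      obtain y where y: "y \<in> active_set p F x \<inter> C" "infdist x (active_set p F x \<inter> C) = dist x y"
        using infdist_attains_inf[OF cl False] by blast
      obtain j where j: "j \<in> {1..p}" "bregman f xs x y \<le> (y - x) \<bullet> (A j *v (y - x))"
        using case2_key[OF rep xs] y(1) by blast
      have "bregman_dist_sq f xs x C \<le> bregman f xs x y" using bds_le[OF xs] y(1) by blast
      also have "\<dots> \<le> K * (norm (y - x))^2" using j hK by (meson order_trans)
      also have "\<dots> \<le> L * (norm (y - x))^2" unfolding L_def by (intro mult_right_mono) auto
      also have "norm (y - x) = infdist x (active_set p F x \<inter> C)" using y(2)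
        by (simp add: dist_norm norm_minus_commute)
      finally show ?thesis using False by simp
    qed
  qed
qed

end
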